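(* Let $\mathbb{K}$ be a field, let $S\subseteq\mathbb{K}$ be a finite set with $0\in S$ and $|S|\ge k+1$, and let $f\in\mathbb{K}[x_1,\ldots,x_n]$ have total degree at most $k$. Then $f\equiv 0$ if and only if $f(a)=0$ for all $a\in W^k_n(S)$.
   Context: $W^k_n(S)$ denotes the set of vectors $a\in S^n$ having at most $k$ nonzero coordinates (Hamming weight at most $k$). *)

theory Defs
  imports Main "HOL-Library.Poly_Mapping"
begin

text \<open>Multivariate polynomials over a field in variables x_0, x_1, ... represented as
  finitely supported maps from monomials (finitely supported exponent vectors) to coefficients.\<close>

type_synonym 'a mpoly_rep = "(nat \<Rightarrow>\<^sub>0 nat) \<Rightarrow>\<^sub>0 'a"

definition mono_deg :: "(nat \<Rightarrow>\<^sub>0 nat) \<Rightarrow> nat" where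
  "mono_deg m = (\<Sum>i\<in>Poly_Mapping.keys m. Poly_Mapping.lookup m i)"

definition total_degree :: "'a::zero mpoly_rep \<Rightarrow> nat" where
  "total_degree p = Max (insert 0 (mono_deg ` Poly_Mapping.keys p))"

definition in_vars :: "nat \<Rightarrow> 'a::zero mpoly_rep \<Rightarrow> bool" where
  "in_vars n p \<longleftrightarrow> (\<forall>m\<in>Poly_Mapping.keys p. Poly_Mapping.keys m \<subseteq> {..<n})"

definition eval_mpoly :: "'a::comm_semiring_1 mpoly_rep \<Rightarrow> (nat \<Rightarrow> 'a) \<Rightarrow> 'a" where
  "eval_mpoly p a = (\<Sum>m\<in>Poly_Mapping.keys p. Poly_Mapping.lookup p m * (\<Prod>i\<in>Poly_Mapping.keys m. a i ^ Poly_Mapping.lookup m i))"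

text \<open>W^k_n(S): vectors a in S^n (coordinates x_0..x_(n-1); padded with 0 beyond n)
  with at most k nonzero coordinates.\<close>
definition W :: "nat \<Rightarrow> nat \<Rightarrow> 'a::zero set \<Rightarrow> (nat \<Rightarrow> 'a) set" where
  "W k n S = {a. (\<forall>i<n. a i \<in> S) \<and> (\<forall>i\<ge>n. a i = 0) \<and> card {i. i < n \<and> a i \<noteq> 0} \<le> k}"

end

theory Submission imports Defs Complex_Main begin

lemma univ_zero:
  fixes a :: "nat \<Rightarrow> 'a::field" and S :: "'a set"
  assumes "finite S" and "card S \<ge> k + 1"
    and "\<forall>t\<in>S. (\<Sum>j\<le>k. a j * t ^ j) = 0"
  shows "\<forall>j\<le>k. a j = 0"
  using assms
proof (induction k arbitrary: a S)
  case 0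
  then obtain r where "r \<in> S" by fastforce
  with 0 show ?case by auto
next
  case (Suc k a S)
  from Suc.prems obtain r where r: "r \<in> S" by fastforce
  define b where "b l = (\<Sum>i=Suc l..Suc k. a i * r^(i - l - 1))" for l
  have pr: "(\<Sum>j\<le>Suc k. a j * r ^ j) = 0" using Suc.prems r by auto
  have fac: "(\<Sum>j\<le>Suc k. a j * t ^ j) = (t - r) * (\<Sum>l\<le>k. b l * t ^ l)" for t
    using polyfun_diff[of "Suc k" a t r] pr by (simp add: b_def lessThan_Suc_atMost)
  have "\<forall>l\<le>k. b l = 0"
  proof (rule Suc.IH)
    show "finite (S - {r})" using Suc.prems by auto
    show "k + 1 \<le> card (S - {r})" using Suc.prems r by (simp add: card_Diff_singleton)
    show "\<forall>t\<in>S - {r}. (\<Sum>l\<le>k. b l * t ^ l) = 0"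
      using Suc.prems fac by auto
  qed
  moreover have rec: "b l = a (Suc l) + r * b (Suc l)" if "l \<le> k" for l
  proof -
    have "b l = a (Suc l) * r ^ 0 + (\<Sum>i=Suc (Suc l)..Suc k. a i * r^(i - l - 1))"
      unfolding b_def using that by (subst sum.atLeast_Suc_atMost) auto
    also have "(\<Sum>i=Suc (Suc l)..Suc k. a i * r^(i - l - 1)) = r * b (Suc l)"
      unfolding b_def sum_distrib_left
      by (intro sum.cong refl) (auto simp: Suc_diff_Suc power_Suc[symmetric] simp del: power_Suc)
    finally show ?thesis by simp
  qed
  moreover have "b (Suc k) = 0" by (simp add: b_def)
  ultimately have as: "a (Suc l) = 0" if "l \<le> k" for l
    using that rec[OF that] by (cases "l = k") auto
  have "(\<Sum>j\<le>Suc k. a j * r ^ j) = a 0"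
    by (subst sum.atMost_Suc_shift) (simp add: as)
  hence "a 0 = 0" using pr by simp
  thus ?case using as by (metis Suc_le_mono not0_implies_Suc)
qed

lemma W_mono: "k \<le> k' \<Longrightarrow> W k n S \<subseteq> W k' n S"
  unfolding W_def by (auto intro: le_trans)

lemma W_suc_zero: "x \<in> W k n S \<Longrightarrow> (0::'a::zero) \<in> S \<Longrightarrow> x \<in> W k (Suc n) S"
proof -
  assume x: "x \<in> W k n S" and z: "0 \<in> S"
  have e: "{i. i < Suc n \<and> x i \<noteq> 0} = {i. i < n \<and> x i \<noteq> 0}"
    using x unfolding W_def by (auto simp: less_Suc_eq)
  show ?thesis unfolding W_def mem_Collect_eq
  proof (intro conjI allI impI)
    fix i assume "i < Suc n" thus "x i \<in> S" using x z unfolding W_def by (cases "i < n") auto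
  next
    fix i assume "Suc n \<le> i" thus "x i = 0" using x unfolding W_def by auto
  next
    show "card {i. i < Suc n \<and> x i \<noteq> 0} \<le> k" unfolding e using x unfolding W_def by simp
  qed
qed
lemma W_extend:
  assumes b: "b \<in> W k n S" and t: "t \<in> S"
  shows "b(n := t) \<in> W (Suc k) (Suc n) S"
proof -
  have "{i. i < Suc n \<and> (b(n:=t)) i \<noteq> 0} \<subseteq> insert n {i. i < n \<and> b i \<noteq> 0}"
    by (auto simp: less_Suc_eq)
  hence "card {i. i < Suc n \<and> (b(n:=t)) i \<noteq> 0} \<le> card (insert n {i. i < n \<and> b i \<noteq> 0})"
    by (intro card_mono) auto
  also have "\<dots> \<le> Suc (card {i. i < n \<and> b i \<noteq> 0})" by (simp add: card_insert_if)
  finally show ?thesis using b t unfolding W_def by (auto simp: less_Suc_eq)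
qed

lemma gen_zero:
  fixes c :: "(nat \<Rightarrow> nat) \<Rightarrow> 'a::field" and S :: "'a set"
  assumes "finite S" and "0 \<in> S"
  shows "\<And>k M c. finite M \<Longrightarrow> card S \<ge> k + 1 \<Longrightarrow>
     (\<forall>e\<in>M. (\<forall>i\<ge>n. e i = 0) \<and> (\<Sum>i<n. e i) \<le> k) \<Longrightarrow>
     (\<forall>x\<in>W k n S. (\<Sum>e\<in>M. c e * (\<Prod>i<n. x i ^ e i)) = 0) \<Longrightarrow> \<forall>e\<in>M. c e = 0"
proof (induction n)
  case 0
  have M: "M \<subseteq> {\<lambda>_. 0}"
  proof
    fix e assume "e \<in> M"
    hence "\<forall>i. e i = 0" using 0(3) by simp
    thus "e \<in> {\<lambda>_. 0}" by auto
  qed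
  have "(\<lambda>_. 0) \<in> W k 0 S" unfolding W_def by simp
  from bspec[OF 0(4) this] have s: "(\<Sum>e\<in>M. c e) = 0" by simp
  show ?case
  proof (cases "M = {}")
    case False
    hence "M = {\<lambda>_. 0}" using M by (simp add: subset_singleton_iff)
    thus ?thesis using s by simp
  qed simp
next
  case (Suc n k M c)
  define G where "G j b = (\<Sum>e\<in>{e\<in>M. e n = j}. c e * (\<Prod>i<n. b i ^ e i))" for j b
  have en: "e n \<le> k" if "e \<in> M" for e
    using Suc.prems(3) that by (fastforce simp: lessThan_Suc)
  have A: "G j b = 0" if b: "b \<in> W (k - 1) n S" and j: "j \<le> k" and k: "k \<ge> 1" for j b
  proof -
    have "\<forall>t\<in>S. (\<Sum>j\<le>k. G j b * t ^ j) = 0"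
    proof
      fix t assume t: "t \<in> S"
      have "b(n:=t) \<in> W k (Suc n) S" using W_extend[OF b t] k by simp
      hence "0 = (\<Sum>e\<in>M. c e * (\<Prod>i<Suc n. (b(n:=t)) i ^ e i))" using Suc.prems(4) by auto
      also have "\<dots> = (\<Sum>e\<in>M. c e * (\<Prod>i<n. b i ^ e i) * t ^ e n)"
        by (intro sum.cong refl) (simp add: lessThan_Suc mult.assoc)
      also have "\<dots> = (\<Sum>j\<le>k. (\<Sum>e\<in>{e\<in>M. e n = j}. c e * (\<Prod>i<n. b i ^ e i) * t ^ e n))"
        by (rule sum.group[symmetric]) (use Suc.prems(1) en in auto)
      also have "\<dots> = (\<Sum>j\<le>k. G j b * t ^ j)"
        unfolding G_def sum_distrib_right by (intro sum.cong refl) auto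
      finally show "(\<Sum>j\<le>k. G j b * t ^ j) = 0" by simp
    qed
    from univ_zero[OF assms(1) Suc.prems(2) this] j show ?thesis by blast
  qed
  have B: "c e = 0" if e: "e \<in> M" "e n \<ge> 1" for e
  proof -
    define j where "j = e n"
    have jk: "j \<le> k" "j \<ge> 1" using en e j_def by auto
    define M' where "M' = (\<lambda>e. e(n:=0)) ` {e\<in>M. e n = j}"
    define c' where "c' e' = c (e'(n:=j))" for e'
    have inj: "inj_on (\<lambda>e. e(n:=0)) {e\<in>M. e n = j}"
      by (rule inj_onI) (metis (mono_tags, lifting) fun_upd_triv fun_upd_upd mem_Collect_eq)
    have "\<forall>e\<in>M'. c' e = 0"
    proof (rule Suc.IH)
      show "finite M'" using Suc.prems(1) M'_def by auto
      show "k - j + 1 \<le> card S" using Suc.prems(2) by simp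
      show "\<forall>e\<in>M'. (\<forall>i\<ge>n. e i = 0) \<and> (\<Sum>i<n. e i) \<le> k - j"
      proof
        fix e' assume "e' \<in> M'"
        then obtain e where e: "e \<in> M" "e n = j" "e' = e(n:=0)" using M'_def by auto
        have "(\<Sum>i<n. e i) + e n \<le> k" using Suc.prems(3) e(1) by (simp add: lessThan_Suc add.commute)
        moreover have "(\<Sum>i<n. e' i) = (\<Sum>i<n. e i)" using e(3) by (intro sum.cong) auto
        moreover have "\<forall>i\<ge>n. e' i = 0" using Suc.prems(3) e by auto
        ultimately show "(\<forall>i\<ge>n. e' i = 0) \<and> (\<Sum>i<n. e' i) \<le> k - j" using e(2) by simp
      qed
      show "\<forall>x\<in>W (k - j) n S. (\<Sum>e\<in>M'. c' e * (\<Prod>i<n. x i ^ e i)) = 0"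
      proof
        fix x assume x: "x \<in> W (k - j) n S"
        have "(\<Sum>e\<in>M'. c' e * (\<Prod>i<n. x i ^ e i)) =
              (\<Sum>e\<in>{e\<in>M. e n = j}. c' (e(n:=0)) * (\<Prod>i<n. x i ^ (e(n:=0)) i))"
          unfolding M'_def by (rule sum.reindex[OF inj, unfolded comp_def])
        also have "\<dots> = G j x" unfolding G_def c'_def
          by (intro sum.cong refl) auto
        also have "\<dots> = 0"
        proof -
          have "k - j \<le> k - 1" using jk by simp
          hence "x \<in> W (k - 1) n S" using W_mono[of "k - j" "k - 1" n S] x by blast
          thus ?thesis using A[of x j] jk by simp
        qed
        finally show "(\<Sum>e\<in>M'. c' e * (\<Prod>i<n. x i ^ e i)) = 0" .
      qed
    qed
    moreover have "e(n:=0) \<in> M'" using e j_def M'_def by auto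
    ultimately show ?thesis unfolding c'_def j_def by (metis fun_upd_triv fun_upd_upd)
  qed
  have C: "\<forall>e\<in>{e\<in>M. e n = 0}. c e = 0"
  proof (rule Suc.IH)
    show "finite {e\<in>M. e n = 0}" using Suc.prems(1) by auto
    show "k + 1 \<le> card S" by fact
    show "\<forall>e\<in>{e\<in>M. e n = 0}. (\<forall>i\<ge>n. e i = 0) \<and> (\<Sum>i<n. e i) \<le> k"
    proof (intro ballI conjI allI impI)
      fix e i assume e: "e \<in> {e\<in>M. e n = 0}" and i: "n \<le> i"
      show "e i = 0"
      proof (cases "i = n")
        case False thus ?thesis using i e Suc.prems(3) by auto
      qed (use e in simp)
    next
      fix e assume e: "e \<in> {e\<in>M. e n = 0}"
      thus "(\<Sum>i<n. e i) \<le> k" using Suc.prems(3) by (auto simp: lessThan_Suc)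
    qed
    show "\<forall>x\<in>W k n S. (\<Sum>e\<in>{e\<in>M. e n = 0}. c e * (\<Prod>i<n. x i ^ e i)) = 0"
    proof
      fix x assume x: "x \<in> W k n S"
      have xn: "x n = 0" using x unfolding W_def by auto
      have "0 = (\<Sum>e\<in>M. c e * (\<Prod>i<Suc n. x i ^ e i))"
        using Suc.prems(4) W_suc_zero[OF x assms(2)] by auto
      also have "\<dots> = (\<Sum>e\<in>{e\<in>M. e n = 0}. c e * (\<Prod>i<Suc n. x i ^ e i))"
        by (rule sum.mono_neutral_right) (use Suc.prems(1) B in auto)
      also have "\<dots> = (\<Sum>e\<in>{e\<in>M. e n = 0}. c e * (\<Prod>i<n. x i ^ e i))"
        by (intro sum.cong refl) (simp add: lessThan_Suc)
      finally show "(\<Sum>e\<in>{e\<in>M. e n = 0}. c e * (\<Prod>i<n. x i ^ e i)) = 0" by simp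
    qed
  qed
  show ?case using B C by (metis (mono_tags, lifting) less_one mem_Collect_eq not_less)
qed

theorem lemma4:
  fixes f :: "'a::field mpoly_rep" and S :: "'a set" and n k :: nat
  assumes "finite S" and "0 \<in> S" and "card S \<ge> k + 1"
    and "in_vars n f" and "total_degree f \<le> k"
  shows "f = 0 \<longleftrightarrow> (\<forall>a\<in>W k n S. eval_mpoly f a = 0)"
proof
  assume "f = 0" thus "\<forall>a\<in>W k n S. eval_mpoly f a = 0" by (simp add: eval_mpoly_def)
next
  assume H: "\<forall>a\<in>W k n S. eval_mpoly f a = 0"
  define M where "M = Poly_Mapping.lookup ` Poly_Mapping.keys f"
  define c where "c e = Poly_Mapping.lookup f (Abs_poly_mapping e)" for e
  have inj: "inj_on Poly_Mapping.lookup (Poly_Mapping.keys f)"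
    by (rule inj_onI) (simp add: poly_mapping_eqI)
  have vars: "Poly_Mapping.keys m \<subseteq> {..<n}" if "m \<in> Poly_Mapping.keys f" for m
    using assms(4) that unfolding in_vars_def by auto
  have pr: "(\<Prod>i\<in>Poly_Mapping.keys m. a i ^ Poly_Mapping.lookup m i) = (\<Prod>i<n. a i ^ Poly_Mapping.lookup m i)"
    if "m \<in> Poly_Mapping.keys f" for m and a :: "nat \<Rightarrow> 'a"
    by (rule prod.mono_neutral_left) (use vars[OF that] in \<open>auto simp: in_keys_iff\<close>)
  have degm: "(\<Sum>i<n. Poly_Mapping.lookup m i) \<le> k" if "m \<in> Poly_Mapping.keys f" for m
  proof -
    have "(\<Sum>i<n. Poly_Mapping.lookup m i) = mono_deg m" unfolding mono_deg_def
      by (rule sum.mono_neutral_left[symmetric]) (use vars[OF that] in \<open>auto simp: in_keys_iff\<close>)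
    also have "\<dots> \<le> total_degree f" unfolding total_degree_def
      using that by (intro Max_ge) auto
    finally show ?thesis using assms(5) by simp
  qed
  have sup: "Poly_Mapping.lookup m i = 0" if "m \<in> Poly_Mapping.keys f" "n \<le> i" for m i
    using vars[OF that(1)] that(2) by (metis in_keys_iff lessThan_iff not_le subsetD)
  have "\<forall>e\<in>M. c e = 0"
  proof (rule gen_zero[OF assms(1,2)])
    show "finite M" unfolding M_def by simp
    show "k + 1 \<le> card S" by fact
    show "\<forall>e\<in>M. (\<forall>i\<ge>n. e i = 0) \<and> (\<Sum>i<n. e i) \<le> k"
      unfolding M_def using sup degm by auto
    show "\<forall>x\<in>W k n S. (\<Sum>e\<in>M. c e * (\<Prod>i<n. x i ^ e i)) = 0"
    proof
      fix x assume x: "x \<in> W k n S"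
      have "(\<Sum>e\<in>M. c e * (\<Prod>i<n. x i ^ e i)) =
            (\<Sum>m\<in>Poly_Mapping.keys f. c (Poly_Mapping.lookup m) * (\<Prod>i<n. x i ^ Poly_Mapping.lookup m i))"
        unfolding M_def by (rule sum.reindex[OF inj, unfolded comp_def])
      also have "\<dots> = eval_mpoly f x" unfolding eval_mpoly_def c_def
        by (intro sum.cong refl) (simp add: pr)
      finally show "(\<Sum>e\<in>M. c e * (\<Prod>i<n. x i ^ e i)) = 0" using H x by simp
    qed
  qed
  hence "Poly_Mapping.keys f = {}" unfolding M_def c_def by (auto simp: in_keys_iff poly_mapping_eqI)
  thus "f = 0" by simp
qed

end
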